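(* Let $G$ be a commutative group, $g\in\mathrm{Aut}(G)$ with $g\ne\mathrm{id}$, and $t\in G$. Let $f$ be the bijection of $G$ given by $f(x)=g(x)t$. Then $Z(G(f))=Z(G(g))$ as sets, and $Z(G(g))=\{x\in G:\ g(x)=x\}$.
   Context: The center $Z(Q)$ of a loop $Q$ is the set of elements that commute with all elements and lie in the left, middle and right nuclei (i.e., associate in every position). Construction $G(f)$: for a commutative group $G$ (written multiplicatively) and a bijection $f:G\to G$, let $\overline{G}=\{\overline{x}:x\in G\}$ be a disjoint copy of $G$, and let $G(f)$ be $G\cup\overline{G}$ with multiplication $x*y=xy$, $x*\overline{y}=\overline{xy}$, $\overline{x}*y=\overline{xy}$, $\overline{x}*\overline{y}=f(xy)$ for $x,y\in G$. *)

theory Defs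
  imports Main
begin

text \<open>The commutative group G is a type of class ab_group_add; the group operation
 (written multiplicatively in the paper) is written additively as +.
 Elements of G(f) are pairs (x, b): (x, False) stands for x and (x, True) for overline x.\<close>

definition Gf_mult :: "('a::ab_group_add \<Rightarrow> 'a) \<Rightarrow> 'a \<times> bool \<Rightarrow> 'a \<times> bool \<Rightarrow> 'a \<times> bool" where
  "Gf_mult f p q =
     (case p of (x, bx) \<Rightarrow> case q of (y, by) \<Rightarrow>
        if bx \<and> by then (f (x + y), False) else (x + y, bx \<noteq> by))"

definition magma_center :: "('q \<Rightarrow> 'q \<Rightarrow> 'q) \<Rightarrow> 'q set" where
  "magma_center m = {a. \<forall>x y.
      m a x = m x a \<and>
      m (m a x) y = m a (m x y) \<and>
      m (m x a) y = m x (m a y) \<and>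
      m (m x y) a = m x (m y a)}"

definition is_aut :: "('a::ab_group_add \<Rightarrow> 'a) \<Rightarrow> bool" where
  "is_aut g \<longleftrightarrow> bij g \<and> (\<forall>x y. g (x + y) = g x + g y)"

end

theory Submission
  imports Defs
begin

lemma center_char:
  fixes h :: "'a::ab_group_add \<Rightarrow> 'a"
  assumes nt: "\<not>(\<exists>c. \<forall>v. h v = v + c)"
  shows "magma_center (Gf_mult h) = {(x, False) | x. \<forall>s. h (x + s) = x + h s}"
proof (intro equalityI subsetI)
  fix a assume a: "a \<in> magma_center (Gf_mult h)"
  obtain x b where ab: "a = (x, b)" by (cases a)
  have key: "\<forall>y z. Gf_mult h (Gf_mult h a y) z = Gf_mult h a (Gf_mult h y z)"
    using a unfolding magma_center_def by blast
  show "a \<in> {(x, False) | x. \<forall>s. h (x + s) = x + h s}"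
  proof (cases b)
    case True
    have "\<forall>v. h v = v + (h x - x)"
    proof
      fix v
      have "Gf_mult h (Gf_mult h a (0, True)) (v, True) = Gf_mult h a (Gf_mult h (0, True) (v, True))"
        using key by blast
      hence "h x + v = x + h v" using True ab by (simp add: Gf_mult_def)
      thus "h v = v + (h x - x)" by (simp add: algebra_simps)
    qed
    with nt show ?thesis by blast
  next
    case False
    have "\<forall>s. h (x + s) = x + h s"
    proof
      fix s
      have "Gf_mult h (Gf_mult h a (0, True)) (s, True) = Gf_mult h a (Gf_mult h (0, True) (s, True))"
        using key by blast
      thus "h (x + s) = x + h s" using False ab by (simp add: Gf_mult_def)
    qed
    thus ?thesis using False ab by blast
  qed
next
  fix a assume "a \<in> {(x, False) | x. \<forall>s. h (x + s) = x + h s}"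
  then obtain x where ax: "a = (x, False)" and hx: "\<And>s. h (x + s) = x + h s" by blast
  have hx': "\<And>u v. h (u + v + x) = h (u + v) + x"
    using hx by (metis add.commute)
  have hx2: "\<And>u v. h (x + (u + v)) = x + h (u + v)" using hx by blast
  show "a \<in> magma_center (Gf_mult h)"
    unfolding magma_center_def ax
    by (auto simp: Gf_mult_def hx hx' add_ac split: prod.splits)
      (metis add.assoc add.commute hx)+
qed

theorem lemma3p1:
  fixes g :: "'a::ab_group_add \<Rightarrow> 'a" and t :: 'a and f :: "'a \<Rightarrow> 'a"
  assumes "is_aut g" and "g \<noteq> id" and "f = (\<lambda>x. g x + t)"
  shows "magma_center (Gf_mult f) = magma_center (Gf_mult g) \<and>
         magma_center (Gf_mult g) = {(x, False) | x. g x = x}"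
proof -
  have add: "\<And>x y. g (x + y) = g x + g y" using assms(1) by (simp add: is_aut_def)
  have g0: "g 0 = 0" using add[of 0 0] by simp
  have nt: "\<not>(\<exists>c. \<forall>v. h v = v + c)" if hd: "h = (\<lambda>x. g x + d)" for h d
  proof
    assume "\<exists>c. \<forall>v. h v = v + c"
    then obtain c where c: "\<And>v. g v + d = v + c" using hd by auto
    have "c = d" using c[of 0] g0 by simp
    hence "g = id" using c by (auto simp: fun_eq_iff)
    with assms(2) show False by simp
  qed
  have e: "(\<forall>s. g (x + s) + d = x + (g s + d)) \<longleftrightarrow> g x = x" for x d
    by (simp add: add algebra_simps)
  have c1: "magma_center (Gf_mult f) = {(x, False) | x. g x = x}"
    using center_char[OF nt[OF assms(3)]] e[of _ t] assms(3) by simp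
  have c2: "magma_center (Gf_mult g) = {(x, False) | x. g x = x}"
    using center_char[OF nt[of g 0]] e[of _ 0] by simp
  show ?thesis using c1 c2 by simp
qed

end
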